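(* Let $n\ge2$, $k\ge1$. Let $\overline C^{\circ}=\{f\in M:\langle f-r^{2k},g-r^{2k}\rangle\le1\ \forall g\in\overline C\}$ be the polar of $\overline C$ in $M$ with respect to the origin $r^{2k}$. Then $\overline C^{\circ}=-\overline C^{*}+2r^{2k}$.
   Context: $P_{n,2k}$: real forms of degree $2k$ in $n$ variables; $r^{2k}=(x_1^2+\dots+x_n^2)^k$; $\langle f,g\rangle=\int_{S^{n-1}}fg\,d\sigma$ with $\sigma$ the rotation-invariant probability measure on $S^{n-1}$. $M=\{f\in P_{n,2k}:\int f\,d\sigma=1\}$, $C$ the cone of nonnegative forms, $\overline C=C\cap M$, $C^*=\{f:\langle f,g\rangle\ge0\ \forall g\in C\}$, $\overline C^*=C^*\cap M$. *)

theory Defs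
  imports "HOL-Analysis.Analysis"
begin

definition monomials :: "nat \<Rightarrow> ('n::finite \<Rightarrow> nat) set" where
  "monomials d = {\<alpha>. (\<Sum>i\<in>UNIV. \<alpha> i) = d}"

text \<open>P_{n,d}: real forms (homogeneous polynomials) of degree d in n = CARD('n) variables,
  represented by their polynomial functions on R^n.\<close>
definition forms :: "nat \<Rightarrow> (real^'n::finite \<Rightarrow> real) set" where
  "forms d = {f. \<exists>c :: ('n \<Rightarrow> nat) \<Rightarrow> real.
      \<forall>x. f x = (\<Sum>\<alpha>\<in>monomials d. c \<alpha> * (\<Prod>i\<in>UNIV. (x $ i) ^ (\<alpha> i)))}"

definition rpow :: "nat \<Rightarrow> real^'n::finite \<Rightarrow> real" where
  "rpow k x = (\<Sum>i\<in>UNIV. (x $ i)^2) ^ k"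

text \<open>The rotation-invariant probability measure on the unit sphere S^{n-1}, obtained as
  the push-forward of the normalized Lebesgue measure on the unit ball under radial projection.\<close>
definition sphere_measure :: "(real^'n::finite) measure" where
  "sphere_measure = distr (uniform_measure lborel (ball 0 1)) borel (\<lambda>x. x /\<^sub>R norm x)"

definition sinner :: "(real^'n::finite \<Rightarrow> real) \<Rightarrow> (real^'n \<Rightarrow> real) \<Rightarrow> real" where
  "sinner f g = (\<integral>x. f x * g x \<partial>(sphere_measure :: (real^'n) measure))"

definition Mset :: "nat \<Rightarrow> (real^'n::finite \<Rightarrow> real) set" where
  "Mset k = {f \<in> forms (2*k). (\<integral>x. f x \<partial>(sphere_measure :: (real^'n) measure)) = 1}"

definition Ccone :: "nat \<Rightarrow> (real^'n::finite \<Rightarrow> real) set" where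
  "Ccone k = {f \<in> forms (2*k). \<forall>x. 0 \<le> f x}"

definition Cbar :: "nat \<Rightarrow> (real^'n::finite \<Rightarrow> real) set" where
  "Cbar k = Ccone k \<inter> Mset k"

definition Cdual :: "nat \<Rightarrow> (real^'n::finite \<Rightarrow> real) set" where
  "Cdual k = {f \<in> forms (2*k). \<forall>g\<in>Ccone k. 0 \<le> sinner f g}"

definition Cdualbar :: "nat \<Rightarrow> (real^'n::finite \<Rightarrow> real) set" where
  "Cdualbar k = Cdual k \<inter> Mset k"

definition Cpolar :: "nat \<Rightarrow> (real^'n::finite \<Rightarrow> real) set" where
  "Cpolar k = {f \<in> Mset k. \<forall>g\<in>Cbar k.
      sinner (\<lambda>x. f x - rpow k x) (\<lambda>x. g x - rpow k x) \<le> 1}"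

end

theory Submission
  imports Defs "HOL-Probability.Probability_Measure"
begin


lemma P_meas: "(\<lambda>x::real^'n::finite. x /\<^sub>R norm x) \<in> borel_measurable borel"
  by measurable

lemma U_prob: "prob_space (uniform_measure lborel (ball (0::real^'n::finite) 1))"
proof -
  have "measure lborel (ball (0::real^'n) 1) > 0" using content_ball_pos[of 1 "0::real^'n"] by simp
  have "emeasure lborel (ball (0::real^'n) 1) \<noteq> 0"
  proof
    assume "emeasure lborel (ball (0::real^'n) 1) = 0"
    then have "measure lborel (ball (0::real^'n) 1) = 0" by (simp add: measure_def)
    with \<open>measure lborel (ball (0::real^'n) 1) > 0\<close> show False by simp
  qed
  moreover have "emeasure lborel (ball (0::real^'n) 1) \<noteq> \<infinity>"
    using emeasure_lborel_ball_finite[of "0::real^'n" 1] by (metis less_imp_neq)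
  ultimately show ?thesis
    by (rule prob_space_uniform_measure)
qed

lemma sm_prob: "prob_space (sphere_measure :: (real^'n::finite) measure)"
  unfolding sphere_measure_def
  by (rule prob_space.prob_space_distr[OF U_prob]) (simp add: P_meas)

lemma sm_AE: "AE x in (sphere_measure :: (real^'n::finite) measure). norm x = 1"
proof -
  have "AE x in lborel. (x::real^'n) \<notin> {0}"
    by (intro AE_not_in countable_imp_null_set_lborel) auto
  then have "AE x in uniform_measure lborel (ball (0::real^'n) 1). x \<noteq> 0"
    by (intro AE_uniform_measureI) auto
  then have "AE x in uniform_measure lborel (ball (0::real^'n) 1). norm (x /\<^sub>R norm x) = 1"
    by eventually_elim simp
  then show ?thesis unfolding sphere_measure_def
    by (subst AE_distr_iff) (auto simp: P_meas)
qed

lemma sm_integrable: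
  assumes "continuous_on UNIV f"
  shows "integrable (sphere_measure :: (real^'n::finite) measure) (f :: _ \<Rightarrow> real)"
proof -
  have fm: "f \<in> borel_measurable borel" using assms by (rule borel_measurable_continuous_onI)
  have "compact (f ` cball 0 1)"
    by (rule compact_continuous_image) (auto intro: continuous_on_subset[OF assms])
  then obtain B where B: "\<And>y. y \<in> f ` cball 0 1 \<Longrightarrow> norm y \<le> B"
    using compact_imp_bounded bounded_iff by metis
  have "\<And>x::real^'n. norm (x /\<^sub>R norm x) \<le> 1"
    by (metis norm_sgn order.refl sgn_div_norm zero_less_one_class.zero_le_one)
  then have bnd: "\<And>x::real^'n. norm (f (x /\<^sub>R norm x)) \<le> B"
    using B by auto
  interpret prob_space "uniform_measure lborel (ball (0::real^'n) 1)" by (rule U_prob)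
  have "integrable (uniform_measure lborel (ball (0::real^'n) 1)) (\<lambda>x. f (x /\<^sub>R norm x))"
  proof (rule integrable_const_bound[where B=B])
    show "AE x in uniform_measure lborel (ball (0::real^'n) 1). norm (f (x /\<^sub>R norm x)) \<le> B"
      using bnd by simp
    have "(\<lambda>x. f (x /\<^sub>R norm x)) \<in> borel_measurable (borel :: (real^'n) measure)"
      by (rule measurable_compose[OF P_meas fm])
    then show "(\<lambda>x. f (x /\<^sub>R norm x)) \<in> borel_measurable (uniform_measure lborel (ball (0::real^'n) 1))"
      by (simp cong: measurable_cong_sets)
  qed
  then show ?thesis unfolding sphere_measure_def
    by (subst integrable_distr_eq) (auto simp: P_meas fm)
qed



lemma finite_monomials: "finite (monomials d :: ('n::finite \<Rightarrow> nat) set)"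
proof -
  have "monomials d \<subseteq> (PiE UNIV (\<lambda>_::'n. {..d}))"
  proof
    fix \<alpha> :: "'n \<Rightarrow> nat" assume a: "\<alpha> \<in> monomials d"
    have "\<alpha> i \<le> d" for i
      using a member_le_sum[of i UNIV \<alpha>] by (auto simp: monomials_def)
    then show "\<alpha> \<in> PiE UNIV (\<lambda>_. {..d})" by (auto simp: PiE_def extensional_def)
  qed
  moreover have "finite (PiE UNIV (\<lambda>_::'n. {..d}))" by (rule finite_PiE) auto
  ultimately show ?thesis by (rule finite_subset)
qed

lemma forms_lin:
  assumes "f \<in> forms d" "g \<in> forms d"
  shows "(\<lambda>x. a * f x + b * g x) \<in> (forms d :: (real^'n::finite \<Rightarrow> real) set)"
proof -
  obtain c where c: "\<And>x. f x = (\<Sum>\<alpha>\<in>monomials d. c \<alpha> * (\<Prod>i\<in>UNIV. (x $ i) ^ (\<alpha> i)))"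
    using assms(1) by (auto simp: forms_def)
  obtain c' where c': "\<And>x. g x = (\<Sum>\<alpha>\<in>monomials d. c' \<alpha> * (\<Prod>i\<in>UNIV. (x $ i) ^ (\<alpha> i)))"
    using assms(2) by (auto simp: forms_def)
  show ?thesis unfolding forms_def
    by (rule CollectI, rule exI[of _ "\<lambda>\<alpha>. a * c \<alpha> + b * c' \<alpha>"])
       (simp add: c c' sum_distrib_left sum.distrib[symmetric] algebra_simps)
qed

lemma forms_zero: "(\<lambda>x. 0) \<in> (forms d :: (real^'n::finite \<Rightarrow> real) set)"
  unfolding forms_def by (rule CollectI, rule exI[of _ "\<lambda>_. 0"]) simp

lemma forms_mult:
  assumes "f \<in> forms d" "g \<in> forms e"
  shows "(\<lambda>x. f x * g x) \<in> (forms (d + e) :: (real^'n::finite \<Rightarrow> real) set)"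
proof -
  let ?m = "\<lambda>(\<alpha>::'n\<Rightarrow>nat) (x::real^'n). \<Prod>i\<in>UNIV. (x $ i) ^ (\<alpha> i)"
  obtain c where c: "\<And>x. f x = (\<Sum>\<alpha>\<in>monomials d. c \<alpha> * ?m \<alpha> x)"
    using assms(1) by (auto simp: forms_def)
  obtain c' where c': "\<And>x. g x = (\<Sum>\<alpha>\<in>monomials e. c' \<alpha> * ?m \<alpha> x)"
    using assms(2) by (auto simp: forms_def)
  define S where "S = (monomials d :: ('n \<Rightarrow> nat) set) \<times> (monomials e :: ('n \<Rightarrow> nat) set)"
  define h where "h = (\<lambda>p::('n\<Rightarrow>nat)\<times>('n\<Rightarrow>nat). (\<lambda>i. fst p i + snd p i))"
  define C where "C = (\<lambda>\<gamma>. \<Sum>p\<in>{p\<in>S. h p = \<gamma>}. c (fst p) * c' (snd p))"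
  have fS: "finite S" by (simp add: S_def finite_monomials)
  have hS: "h ` S \<subseteq> monomials (d+e)"
    by (auto simp: S_def h_def monomials_def sum.distrib)
  have mh: "?m (h p) x = ?m (fst p) x * ?m (snd p) x" for p x
    by (simp add: h_def power_add prod.distrib)
  have "f x * g x = (\<Sum>\<gamma>\<in>monomials (d+e). C \<gamma> * ?m \<gamma> x)" for x
  proof -
    have "f x * g x = (\<Sum>p\<in>S. c (fst p) * c' (snd p) * ?m (h p) x)"
      unfolding c c' S_def sum_product sum.cartesian_product mh
      by (rule sum.cong) (auto simp: algebra_simps)
    also have "\<dots> = (\<Sum>\<gamma>\<in>monomials (d+e). \<Sum>p\<in>{p\<in>S. h p = \<gamma>}. c (fst p) * c' (snd p) * ?m (h p) x)"
      by (rule sum.group[symmetric, OF fS finite_monomials hS])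
    also have "\<dots> = (\<Sum>\<gamma>\<in>monomials (d+e). C \<gamma> * ?m \<gamma> x)"
      unfolding C_def sum_distrib_right
      by (rule sum.cong[OF refl], rule sum.cong) auto
    finally show ?thesis .
  qed
  then show ?thesis unfolding forms_def by (intro CollectI exI[of _ C]) blast
qed

lemma forms_var: "(\<lambda>x. x $ j) \<in> (forms 1 :: (real^'n::finite \<Rightarrow> real) set)"
proof -
  define e where "e = (\<lambda>i::'n. if i = j then 1 else (0::nat))"
  have e1: "e \<in> monomials 1" by (simp add: e_def monomials_def)
  have me: "(\<Prod>i\<in>UNIV. (x $ i) ^ (e i)) = x $ j" for x :: "real^'n"
  proof -
    have "(\<Prod>i\<in>UNIV. (x $ i) ^ (e i)) = (\<Prod>i\<in>UNIV. if i = j then x $ i else 1)"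
      by (rule prod.cong) (auto simp: e_def)
    also have "\<dots> = x $ j" by (simp add: prod.delta)
    finally show ?thesis .
  qed
  have "x $ j = (\<Sum>\<alpha>\<in>monomials 1. (if \<alpha> = e then 1 else 0) * (\<Prod>i\<in>UNIV. (x $ i) ^ (\<alpha> i)))" for x :: "real^'n"
  proof -
    have "(\<Sum>\<alpha>\<in>monomials 1. (if \<alpha> = e then 1 else 0) * (\<Prod>i\<in>UNIV. (x $ i) ^ (\<alpha> i)))
        = (\<Sum>\<alpha>\<in>monomials 1. if \<alpha> = e then (\<Prod>i\<in>UNIV. (x $ i) ^ (\<alpha> i)) else 0)"
      by (rule sum.cong) auto
    also have "\<dots> = x $ j" using sum.delta'[OF finite_monomials[of 1], of e "\<lambda>\<alpha>. \<Prod>i\<in>UNIV. (x $ i) ^ (\<alpha> i)"] e1 me[of x] by (simp add: eq_commute)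
    finally show ?thesis by simp
  qed
  then show ?thesis unfolding forms_def by (intro CollectI exI[of _ "\<lambda>\<alpha>. if \<alpha> = e then 1 else 0"]) blast
qed

lemma forms_one: "(\<lambda>x. 1) \<in> (forms 0 :: (real^'n::finite \<Rightarrow> real) set)"
proof -
  have "monomials 0 = {(\<lambda>_::'n. 0::nat)}" by (auto simp: monomials_def)
  then have "1 = (\<Sum>\<alpha>\<in>monomials 0. 1 * (\<Prod>i\<in>UNIV. ((x::real^'n) $ i) ^ (\<alpha> i)))" for x
    by simp
  then show ?thesis unfolding forms_def by (intro CollectI exI[of _ "\<lambda>_. 1"]) blast
qed

lemma forms_sum:
  assumes "finite A" "\<And>a. a \<in> A \<Longrightarrow> F a \<in> forms d"
  shows "(\<lambda>x. \<Sum>a\<in>A. F a x) \<in> (forms d :: (real^'n::finite \<Rightarrow> real) set)"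
  using assms
proof (induction A rule: finite_induct)
  case empty then show ?case by (simp add: forms_zero)
next
  case (insert a A)
  then show ?case using forms_lin[of "F a" d "\<lambda>x. \<Sum>a\<in>A. F a x" 1 1] by simp
qed

lemma rpow_forms: "rpow k \<in> (forms (2*k) :: (real^'n::finite \<Rightarrow> real) set)"
proof (induction k)
  case 0
  then show ?case using forms_one by (simp add: rpow_def[abs_def])
next
  case (Suc k)
  have "(\<lambda>x::real^'n. (x $ i)^2) \<in> forms 2" for i
  proof -
    have "(\<lambda>x::real^'n. x $ i * x $ i) \<in> forms (1+1)" by (rule forms_mult[OF forms_var forms_var])
    then show ?thesis by (simp only: one_add_one power2_eq_square)
  qed
  then have s: "(\<lambda>x::real^'n. \<Sum>i\<in>UNIV. (x $ i)^2) \<in> forms 2"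
    by (intro forms_sum) auto
  have "rpow (Suc k) = (\<lambda>x::real^'n. (\<Sum>i\<in>UNIV. (x $ i)^2) * rpow k x)"
    by (simp add: rpow_def[abs_def])
  then show ?case using forms_mult[OF s Suc.IH] by simp
qed

lemma forms_cont:
  assumes "f \<in> (forms d :: (real^'n::finite \<Rightarrow> real) set)"
  shows "continuous_on UNIV f"
proof -
  obtain c where c: "\<And>x. f x = (\<Sum>\<alpha>\<in>monomials d. c \<alpha> * (\<Prod>i\<in>UNIV. (x $ i) ^ (\<alpha> i)))"
    using assms by (auto simp: forms_def)
  have "f = (\<lambda>x. \<Sum>\<alpha>\<in>monomials d. c \<alpha> * (\<Prod>i\<in>UNIV. (x $ i) ^ (\<alpha> i)))" using c by auto
  moreover have "continuous_on UNIV (\<lambda>x::real^'n. \<Sum>\<alpha>\<in>monomials d. c \<alpha> * (\<Prod>i\<in>UNIV. (x $ i) ^ (\<alpha> i)))"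
    by (intro continuous_intros)
  ultimately show ?thesis by simp
qed


lemma sm_sets: "sets (sphere_measure :: (real^'n::finite) measure) = sets borel"
  by (simp add: sphere_measure_def)

lemma cont_meas: "continuous_on UNIV f \<Longrightarrow> (f :: real^'n::finite \<Rightarrow> real) \<in> borel_measurable sphere_measure"
  using borel_measurable_continuous_onI[of f] by (simp cong: measurable_cong_sets add: sm_sets)

lemma int_eq_sphere:
  fixes \<phi> \<psi> :: "real^'n::finite \<Rightarrow> real"
  assumes "continuous_on UNIV \<phi>" "continuous_on UNIV \<psi>" "\<And>x. norm x = 1 \<Longrightarrow> \<phi> x = \<psi> x"
  shows "(\<integral>x. \<phi> x \<partial>sphere_measure) = (\<integral>x. \<psi> x \<partial>sphere_measure)"
proof (rule integral_cong_AE)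
  show "AE x in sphere_measure. \<phi> x = \<psi> x" using sm_AE by eventually_elim (use assms(3) in auto)
qed (auto intro: cont_meas assms)

lemma rpow_sphere: "norm (x::real^'n::finite) = 1 \<Longrightarrow> rpow k x = 1"
proof -
  assume "norm x = 1"
  moreover have "(\<Sum>i\<in>UNIV. (x $ i)^2) = norm x ^ 2"
    by (simp add: norm_vec_def L2_set_def sum_nonneg)
  ultimately show ?thesis by (simp add: rpow_def)
qed

lemma rpow_cont: "continuous_on UNIV (rpow k :: real^'n::finite \<Rightarrow> real)"
  by (rule forms_cont[OF rpow_forms])

lemma sm_measure1: "measure (sphere_measure :: (real^'n::finite) measure) (space sphere_measure) = 1"
  by (rule prob_space.prob_space[OF sm_prob])

lemma int_one: "(\<integral>x. (1::real) \<partial>(sphere_measure :: (real^'n::finite) measure)) = 1"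
proof -
  interpret prob_space "sphere_measure :: (real^'n) measure" by (rule sm_prob)
  show ?thesis by (simp add: sm_measure1)
qed

lemma int_rpow: "(\<integral>x. rpow k x \<partial>(sphere_measure :: (real^'n::finite) measure)) = 1"
proof -
  have "(\<integral>x. rpow k x \<partial>(sphere_measure :: (real^'n::finite) measure)) = (\<integral>x. 1 \<partial>(sphere_measure :: (real^'n::finite) measure))"
    by (rule int_eq_sphere[OF rpow_cont continuous_on_const rpow_sphere])
  then show ?thesis using int_one by simp
qed

lemma ident2:
  fixes f g :: "real^'n::finite \<Rightarrow> real"
  assumes f: "continuous_on UNIV f" and g: "continuous_on UNIV g"
  shows "sinner (\<lambda>x. f x - rpow k x) (\<lambda>x. g x - rpow k x)
     = sinner f g - (\<integral>x. f x \<partial>sphere_measure) - (\<integral>x. g x \<partial>sphere_measure) + 1"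
proof -
  have c: "continuous_on UNIV (rpow k :: real^'n \<Rightarrow> real)" by (rule rpow_cont)
  have "sinner (\<lambda>x. f x - rpow k x) (\<lambda>x. g x - rpow k x)
      = (\<integral>x. ((f x * g x - f x) - g x) + 1 \<partial>sphere_measure)"
    unfolding sinner_def
    by (rule int_eq_sphere) (auto intro!: continuous_intros f g c simp: rpow_sphere algebra_simps)
  also have "\<dots> = sinner f g - (\<integral>x. f x \<partial>sphere_measure) - (\<integral>x. g x \<partial>sphere_measure) + 1"
  proof -
    have i: "integrable sphere_measure (\<lambda>x. f x * g x)" "integrable sphere_measure f"
      "integrable sphere_measure g" "integrable sphere_measure (\<lambda>x. 1::real)"
      "integrable sphere_measure (\<lambda>x. f x * g x - f x)"
      "integrable sphere_measure (\<lambda>x. f x * g x - f x - g x)"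
      by (auto intro!: sm_integrable continuous_intros f g)
    show ?thesis unfolding sinner_def
      by (simp add: Bochner_Integration.integral_add[OF i(6) i(4)] Bochner_Integration.integral_diff[OF i(5) i(3)] Bochner_Integration.integral_diff[OF i(1) i(2)] int_one sm_measure1)
  qed
  finally show ?thesis .
qed

lemma ident3:
  fixes f g :: "real^'n::finite \<Rightarrow> real"
  assumes f: "continuous_on UNIV f" and g: "continuous_on UNIV g"
  shows "sinner (\<lambda>x. 2 * rpow k x - f x) g = 2 * (\<integral>x. g x \<partial>sphere_measure) - sinner f g"
proof -
  have c: "continuous_on UNIV (rpow k :: real^'n \<Rightarrow> real)" by (rule rpow_cont)
  have "sinner (\<lambda>x. 2 * rpow k x - f x) g = (\<integral>x. 2 * g x - f x * g x \<partial>sphere_measure)"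
    unfolding sinner_def
    by (rule int_eq_sphere) (auto intro!: continuous_intros f g c simp: rpow_sphere algebra_simps)
  also have "\<dots> = 2 * (\<integral>x. g x \<partial>sphere_measure) - sinner f g"
  proof -
    have i: "integrable sphere_measure (\<lambda>x. f x * g x)" "integrable sphere_measure (\<lambda>x. 2 * g x)"
      by (auto intro!: sm_integrable continuous_intros f g)
    show ?thesis unfolding sinner_def
      by (simp add: Bochner_Integration.integral_diff[OF i(2) i(1)])
  qed
  finally show ?thesis .
qed


lemma forms_cont2: "f \<in> forms (2*k) \<Longrightarrow> continuous_on UNIV (f :: real^'n::finite \<Rightarrow> real)"
  by (rule forms_cont)

theorem lemma5p1:
  assumes "CARD('n::finite) \<ge> 2" and "k \<ge> 1"
  shows "(Cpolar k :: (real^'n \<Rightarrow> real) set)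
           = (\<lambda>h x. - h x + 2 * rpow k x) ` (Cdualbar k :: (real^'n \<Rightarrow> real) set)"
proof
  show "(Cpolar k :: (real^'n \<Rightarrow> real) set) \<subseteq> (\<lambda>h x. - h x + 2 * rpow k x) ` Cdualbar k"
  proof
    fix f :: "real^'n \<Rightarrow> real"
    assume fP: "f \<in> Cpolar k"
    then have fF: "f \<in> forms (2*k)" and fI: "(\<integral>x. f x \<partial>sphere_measure) = 1"
      and fpol: "\<And>g. g \<in> Cbar k \<Longrightarrow> sinner (\<lambda>x. f x - rpow k x) (\<lambda>x. g x - rpow k x) \<le> 1"
      by (auto simp: Cpolar_def Mset_def)
    have fc: "continuous_on UNIV f" using fF by (rule forms_cont)
    have rc: "continuous_on UNIV (rpow k :: real^'n \<Rightarrow> real)" by (rule rpow_cont)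
    define h where "h = (\<lambda>x. 2 * rpow k x - f x)"
    have hF: "h \<in> forms (2*k)"
      using forms_lin[OF rpow_forms fF, of 2 "-1"] by (simp add: h_def)
    have hc: "continuous_on UNIV h" unfolding h_def by (intro continuous_intros rc fc)
    have hI: "(\<integral>x. h x \<partial>sphere_measure) = 1"
    proof -
      have i: "integrable sphere_measure (\<lambda>x. 2 * rpow k x :: real)" "integrable sphere_measure f"
        by (auto intro!: sm_integrable continuous_intros rc fc simp: rpow_cont)
      show ?thesis unfolding h_def
        by (simp add: Bochner_Integration.integral_diff[OF i] int_rpow fI)
    qed
    have hD: "0 \<le> sinner h g" if gC: "g \<in> Ccone k" for g
    proof -
      have gF: "g \<in> forms (2*k)" and gnn: "\<And>x. 0 \<le> g x" using gC by (auto simp: Ccone_def)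
      have gc: "continuous_on UNIV g" using gF by (rule forms_cont)
      have gi: "integrable sphere_measure g" by (rule sm_integrable[OF gc])
      define I where "I = (\<integral>x. g x \<partial>sphere_measure)"
      have I0: "0 \<le> I" unfolding I_def by (rule integral_nonneg_AE) (simp add: gnn)
      show ?thesis
      proof (cases "I = 0")
        case True
        then have "AE x in sphere_measure. g x = 0"
          using integral_nonneg_eq_0_iff_AE[OF gi] gnn unfolding I_def by simp
        then have "AE x in sphere_measure. h x * g x = 0" by eventually_elim simp
        then have "sinner h g = (\<integral>x. 0 \<partial>(sphere_measure :: (real^'n) measure))" unfolding sinner_def
          by (intro integral_cong_AE) (auto intro!: cont_meas continuous_intros hc gc)
        then show ?thesis by simp
      next
        case False
        with I0 have Ip: "I > 0" by simp
        define g' where "g' = (\<lambda>x. g x / I)"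
        have g'F: "g' \<in> forms (2*k)"
          using forms_lin[OF gF gF, of "1/I" 0] by (simp add: g'_def)
        have g'c: "continuous_on UNIV g'" using g'F by (rule forms_cont)
        have g'I: "(\<integral>x. g' x \<partial>sphere_measure) = 1"
          unfolding g'_def using Ip by (simp add: I_def)
        have g'B: "g' \<in> Cbar k"
          using g'F g'I gnn Ip by (auto simp: Cbar_def Ccone_def Mset_def g'_def)
        have "sinner f g' - 1 - 1 + 1 \<le> 1"
          using fpol[OF g'B] ident2[OF fc g'c, of k] fI g'I by simp
        then have fg': "sinner f g' \<le> 2" by simp
        have "sinner f g = I * sinner f g'"
          unfolding sinner_def g'_def using Ip
          by (simp add: mult.assoc)
        moreover have "sinner h g = 2 * I - sinner f g"
          unfolding h_def using ident3[OF fc gc, of k] by (simp add: I_def)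
        ultimately have "sinner h g = I * (2 - sinner f g')" by (simp add: algebra_simps)
        then show ?thesis using fg' I0 by simp
      qed
    qed
    have "h \<in> Cdualbar k"
      using hF hI hD by (auto simp: Cdualbar_def Cdual_def Mset_def)
    moreover have "f = (\<lambda>x. - h x + 2 * rpow k x)" by (simp add: h_def)
    ultimately show "f \<in> (\<lambda>h x. - h x + 2 * rpow k x) ` Cdualbar k" by blast
  qed
next
  show "(\<lambda>h x. - h x + 2 * rpow k x) ` Cdualbar k \<subseteq> (Cpolar k :: (real^'n \<Rightarrow> real) set)"
  proof
    fix f :: "real^'n \<Rightarrow> real"
    assume "f \<in> (\<lambda>h x. - h x + 2 * rpow k x) ` Cdualbar k"
    then obtain h where hD: "h \<in> Cdualbar k" and fdef: "f = (\<lambda>x. - h x + 2 * rpow k x)" by blast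
    have hF: "h \<in> forms (2*k)" and hI: "(\<integral>x. h x \<partial>sphere_measure) = 1"
      and hpos: "\<And>g. g \<in> Ccone k \<Longrightarrow> 0 \<le> sinner h g"
      using hD by (auto simp: Cdualbar_def Cdual_def Mset_def)
    have hc: "continuous_on UNIV h" using hF by (rule forms_cont)
    have rc: "continuous_on UNIV (rpow k :: real^'n \<Rightarrow> real)" by (rule rpow_cont)
    have f2: "f = (\<lambda>x. 2 * rpow k x - h x)" by (simp add: fdef)
    have fF: "f \<in> forms (2*k)"
      using forms_lin[OF rpow_forms hF, of 2 "-1"] by (simp add: f2)
    have fc: "continuous_on UNIV f" using fF by (rule forms_cont)
    have fI: "(\<integral>x. f x \<partial>sphere_measure) = 1"
    proof -
      have i: "integrable sphere_measure (\<lambda>x. 2 * rpow k x :: real)" "integrable sphere_measure h"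
        by (auto intro!: sm_integrable continuous_intros rc hc simp: rpow_cont)
      show ?thesis unfolding f2
        by (simp add: Bochner_Integration.integral_diff[OF i] int_rpow hI)
    qed
    have "sinner (\<lambda>x. f x - rpow k x) (\<lambda>x. g x - rpow k x) \<le> 1" if gB: "g \<in> Cbar k" for g
    proof -
      have gC: "g \<in> Ccone k" and gF: "g \<in> forms (2*k)" and gI: "(\<integral>x. g x \<partial>sphere_measure) = 1"
        using gB by (auto simp: Cbar_def Mset_def Ccone_def)
      have gc: "continuous_on UNIV g" using gF by (rule forms_cont)
      have "sinner f g = 2 - sinner h g"
        unfolding f2 using ident3[OF hc gc, of k] gI by simp
      then show ?thesis using ident2[OF fc gc, of k] fI gI hpos[OF gC] by simp
    qed
    then show "f \<in> Cpolar k" using fF fI by (auto simp: Cpolar_def Mset_def)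
  qed
qed

end
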